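(* Let $S$ be an inverse semigroup whose semilattice of idempotents $\Sigma$ is a continuous poset. Then $S$ is a mirror semigroup if and only if, for every $\epsilon\in\Sigma$ and every pair of distinct elements $s,t\in H_\epsilon$, there exists $\varphi\in\Sigma$ with $\varphi \prec\!\!\!\prec \epsilon$ and $s\varphi\neq t\varphi$. In this case, $(S,\leqslant)$ is a continuous poset.
   Context: An inverse semigroup is a semigroup $S$ in which every $s$ has a unique $s^*$ with $ss^*s=s$ and $s^*ss^*=s^*$. $\Sigma=\Sigma(S)$ is the set of idempotents. The intrinsic order is $s\leqslant t$ iff $s=t\epsilon$ for some idempotent $\epsilon$. For $\epsilon\in\Sigma$, $H_\epsilon=\{s\in S : s^*s=\epsilon\}$. A subset is directed if nonempty and any two elements have an upper bound in it. $S$ is a mirror semigroup if every directed subset of $\Sigma$ having a supremum in $(\Sigma,\leqslant)$ also has a supremum in $(S,\leqslant)$. In a poset, $x$ is way-below $y$ if for every directed subset $D$ that has a supremum with $y\leqslant \sup D$, there is $d\in D$ with $x\leqslant d$; $\prec\!\!\!\prec$ denotes the way-below relation of the poset $(\Sigma,\leqslant)$. A poset is continuous if for every element $s$ the set of elements way-below $s$ is directed with supremum $s$. *)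

theory Defs
  imports Main
begin

class inverse_semigroup = semigroup_mult +
  assumes unique_inverse: "\<forall>s::'a. \<exists>!t. s * t * s = s \<and> t * s * t = t"

context inverse_semigroup
begin

definition istar :: "'a \<Rightarrow> 'a" where
  "istar s = (THE t. s * t * s = s \<and> t * s * t = t)"

definition Idem :: "'a set" where
  "Idem = {e. e * e = e}"

definition ileq :: "'a \<Rightarrow> 'a \<Rightarrow> bool" where
  "ileq s t \<longleftrightarrow> (\<exists>e\<in>Idem. s = t * e)"

definition H :: "'a \<Rightarrow> 'a set" where
  "H e = {s. istar s * s = e}"

end

definition directed_in :: "('a \<Rightarrow> 'a \<Rightarrow> bool) \<Rightarrow> 'a set \<Rightarrow> bool" where
  "directed_in le D \<longleftrightarrow> D \<noteq> {} \<and> (\<forall>x\<in>D. \<forall>y\<in>D. \<exists>z\<in>D. le x z \<and> le y z)"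

definition is_sup_in :: "('a \<Rightarrow> 'a \<Rightarrow> bool) \<Rightarrow> 'a set \<Rightarrow> 'a set \<Rightarrow> 'a \<Rightarrow> bool" where
  "is_sup_in le A D x \<longleftrightarrow> x \<in> A \<and> (\<forall>d\<in>D. le d x) \<and>
     (\<forall>y\<in>A. (\<forall>d\<in>D. le d y) \<longrightarrow> le x y)"

definition way_below_in :: "('a \<Rightarrow> 'a \<Rightarrow> bool) \<Rightarrow> 'a set \<Rightarrow> 'a \<Rightarrow> 'a \<Rightarrow> bool" where
  "way_below_in le A x y \<longleftrightarrow>
     (\<forall>D. D \<subseteq> A \<longrightarrow> directed_in le D \<longrightarrow>
        (\<forall>s. is_sup_in le A D s \<longrightarrow> le y s \<longrightarrow> (\<exists>d\<in>D. le x d)))"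

definition continuous_poset :: "('a \<Rightarrow> 'a \<Rightarrow> bool) \<Rightarrow> 'a set \<Rightarrow> bool" where
  "continuous_poset le A \<longleftrightarrow>
     (\<forall>s\<in>A. directed_in le {x\<in>A. way_below_in le A x s} \<and>
             is_sup_in le A {x\<in>A. way_below_in le A x s} s)"

definition mirror_semigroup :: "'a::inverse_semigroup itself \<Rightarrow> bool" where
  "mirror_semigroup _ \<longleftrightarrow>
     (\<forall>D. D \<subseteq> (Idem::'a set) \<longrightarrow> directed_in ileq D \<longrightarrow>
        (\<exists>x. is_sup_in ileq Idem D x) \<longrightarrow> (\<exists>y. is_sup_in ileq UNIV D y))"

end

theory Submission
  imports Defs
begin

context inverse_semigroup
begin

lemma inv_props: "s * istar s * s = s" "istar s * s * istar s = istar s"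
proof -
  have "\<exists>!t. s * t * s = s \<and> t * s * t = t" using unique_inverse by blast
  then have "s * istar s * s = s \<and> istar s * s * istar s = istar s"
    unfolding istar_def by (rule theI')
  then show "s * istar s * s = s" "istar s * s * istar s = istar s" by auto
qed

lemma inv_uniq: "s * t * s = s \<Longrightarrow> t * s * t = t \<Longrightarrow> t = istar s"
proof -
  assume a: "s * t * s = s" "t * s * t = t"
  have "\<exists>!t. s * t * s = s \<and> t * s * t = t" using unique_inverse by blast
  then show ?thesis using a inv_props[of s] by blast
qed

lemma idem_star: "e * e = e \<Longrightarrow> istar e = e"
  by (metis inv_uniq)

lemma prod_idem:
  assumes ee: "e * e = e" and ff: "f * f = f"
  shows "(e * f) * (e * f) = e * f"
proof -
  define a where "a = e * f"
  define x where "x = istar a"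
  have 1: "a * x * a = a" "x * a * x = x" using inv_props[of a] x_def by auto
  have ee': "\<And>y. e * (e * y) = e * y" using ee by (metis mult.assoc)
  have ff': "\<And>y. f * (f * y) = f * y" using ff by (metis mult.assoc)
  have 2: "a * (f * x * e) * a = a"
    using 1 unfolding a_def by (simp add: mult.assoc ee' ff' ee ff)
  have xx: "\<And>y. x * (e * (f * (x * y))) = x * y" using 1 unfolding a_def by (metis mult.assoc)
  have 3: "(f * x * e) * a * (f * x * e) = f * x * e"
    using 1 xx unfolding a_def by (simp add: mult.assoc ee' ff' ee ff)
  have 4: "f * x * e = x" using inv_uniq[OF 2 3] x_def by simp
  have 5: "x * x = x"
  proof -
    have "x * x = (f * x * e) * (f * x * e)" using 4 by simp
    also have "\<dots> = f * (x * a * x) * e" unfolding a_def by (simp add: mult.assoc)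
    also have "\<dots> = x" using 1 4 by simp
    finally show ?thesis .
  qed
  have 6: "a = istar x" using inv_uniq[of x a] 1 by simp
  have "istar x = x" using idem_star[OF 5] .
  then have "a = x" using 6 by simp
  then show ?thesis using 5 a_def by simp
qed

lemma idem_comm:
  assumes ee: "e * e = e" and ff: "f * f = f"
  shows "e * f = f * e"
proof -
  have ef: "(e * f) * (e * f) = e * f" using prod_idem[OF ee ff] .
  have fe: "(f * e) * (f * e) = f * e" using prod_idem[OF ff ee] .
  have ee': "\<And>y. e * (e * y) = e * y" using ee by (metis mult.assoc)
  have ff': "\<And>y. f * (f * y) = f * y" using ff by (metis mult.assoc)
  have ef': "e * (f * (e * f)) = e * f" using ef by (simp add: mult.assoc)
  have fe': "f * (e * (f * e)) = f * e" using fe by (simp add: mult.assoc)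
  have 1: "(e * f) * (f * e) * (e * f) = e * f"
    by (simp add: mult.assoc ee' ff' ef')
  have 2: "(f * e) * (e * f) * (f * e) = f * e"
    by (simp add: mult.assoc ee' ff' fe')
  have "f * e = istar (e * f)" using inv_uniq[OF 1 2] .
  also have "\<dots> = e * f" using idem_star[OF ef] .
  finally show ?thesis by simp
qed

lemma Idem_iff: "e \<in> Idem \<longleftrightarrow> e * e = e" by (simp add: Idem_def)

lemma comm: "e \<in> Idem \<Longrightarrow> f \<in> Idem \<Longrightarrow> e * f = f * e"
  using idem_comm Idem_iff by blast

lemma comm2: "e \<in> Idem \<Longrightarrow> f \<in> Idem \<Longrightarrow> e * (f * x) = f * (e * x)"
  by (metis comm mult.assoc)

lemma absorb: "e \<in> Idem \<Longrightarrow> e * (e * x) = e * x"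
  by (metis Idem_iff mult.assoc)

lemma absorb_r: "e \<in> Idem \<Longrightarrow> x * e * e = x * e"
  by (metis Idem_iff mult.assoc)

lemma mult_Idem: "e \<in> Idem \<Longrightarrow> f \<in> Idem \<Longrightarrow> e * f \<in> Idem"
  using prod_idem Idem_iff by blast

lemma L_Idem: "istar s * s \<in> Idem"
  unfolding Idem_iff by (metis inv_props(2) mult.assoc)

lemma R_Idem: "s * istar s \<in> Idem"
  unfolding Idem_iff by (metis inv_props(1) mult.assoc)

lemma rL: "s * (istar s * s) = s" by (metis inv_props(1) mult.assoc)
lemma Rl: "s * istar s * s = s" by (rule inv_props(1))

lemma star_star: "istar (istar s) = s"
  using inv_uniq[of "istar s" s] inv_props[of s] by simp

lemma idem_star': "e \<in> Idem \<Longrightarrow> istar e = e"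
  using idem_star Idem_iff by blast

lemma star_mult: "istar (s * t) = istar t * istar s"
proof -
  have a: "(s * t) * (istar t * istar s) * (s * t) = s * t"
  proof -
    have "(s * t) * (istar t * istar s) * (s * t) = s * ((t * istar t) * ((istar s * s) * t))"
      by (simp add: mult.assoc)
    also have "\<dots> = s * ((istar s * s) * ((t * istar t) * t))"
      using comm2[OF R_Idem L_Idem] by simp
    also have "\<dots> = s * t" by (simp add: inv_props mult.assoc[symmetric])
    finally show ?thesis .
  qed
  have b: "(istar t * istar s) * (s * t) * (istar t * istar s) = istar t * istar s"
  proof -
    have "(istar t * istar s) * (s * t) * (istar t * istar s) = istar t * ((istar s * s) * ((t * istar t) * istar s))"
      by (simp add: mult.assoc)
    also have "\<dots> = istar t * ((t * istar t) * ((istar s * s) * istar s))"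
      using comm2[OF L_Idem R_Idem] by simp
    also have "\<dots> = istar t * istar s" by (simp add: inv_props mult.assoc[symmetric])
    finally show ?thesis .
  qed
  show ?thesis using inv_uniq[OF a b] by simp
qed

lemma ileq_iff: "ileq s t \<longleftrightarrow> s = t * (istar s * s)"
proof
  assume "ileq s t"
  then obtain g where g: "g \<in> Idem" "s = t * g" unfolding ileq_def by blast
  have "istar s * s = g * (istar t * t) * g"
    using g by (simp add: star_mult idem_star' mult.assoc)
  also have "\<dots> = istar t * t * g"
    using g comm[OF g(1) L_Idem[of t]] by (metis absorb_r mult.assoc)
  finally have "t * (istar s * s) = t * (istar t * t) * g" by (simp add: mult.assoc)
  then show "s = t * (istar s * s)" using g rL by simp
next
  assume "s = t * (istar s * s)"
  then show "ileq s t" unfolding ileq_def using L_Idem by blast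
qed

lemma ileq_Idem: "e \<in> Idem \<Longrightarrow> f \<in> Idem \<Longrightarrow> ileq e f \<longleftrightarrow> e = f * e"
  by (simp add: ileq_iff idem_star' Idem_iff)

lemma ileq_refl: "ileq s s" by (simp add: ileq_iff rL)

lemma ileq_trans: "ileq a b \<Longrightarrow> ileq b c \<Longrightarrow> ileq a c"
  unfolding ileq_def by (metis mult_Idem mult.assoc)

lemma ileq_antisym: "ileq a b \<Longrightarrow> ileq b a \<Longrightarrow> a = b"
proof -
  assume "ileq a b" "ileq b a"
  then obtain g h where gh: "g \<in> Idem" "h \<in> Idem" "a = b * g" "b = a * h" unfolding ileq_def by blast
  have "a * h * h = a * h" by (rule absorb_r[OF gh(2)])
  then have "b * h = b" by (simp only: gh(4)[symmetric])
  have "b = a * h" by (rule gh(4))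
  also have "\<dots> = b * g * h" by (simp only: gh(3))
  also have "\<dots> = b * h * g" using comm[OF gh(1,2)] by (simp add: mult.assoc)
  also have "\<dots> = a" using \<open>b * h = b\<close> gh(3) by simp
  finally show ?thesis by simp
qed

lemma below_Idem: "ileq y e \<Longrightarrow> e \<in> Idem \<Longrightarrow> y \<in> Idem"
  unfolding ileq_def using mult_Idem by blast

lemma right_ileq: "f \<in> Idem \<Longrightarrow> ileq (u * f) u"
  unfolding ileq_def by blast

lemma left_ileq: assumes f: "f \<in> Idem" shows "ileq (f * u) u"
proof -
  have "istar (f * u) * (f * u) = istar u * (f * u)"
    using f by (simp add: star_mult idem_star' mult.assoc absorb)
  then have "u * (istar (f * u) * (f * u)) = (u * istar u) * (f * u)" by (simp add: mult.assoc)
  also have "\<dots> = f * ((u * istar u) * u)" using comm2[OF R_Idem f] by (simp add: mult.assoc)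
  also have "\<dots> = f * u" by (simp add: Rl)
  finally show ?thesis using ileq_iff by metis
qed

lemma mono_L: assumes "ileq a b" shows "ileq (istar a * a) (istar b * b)"
proof -
  have "a = b * (istar a * a)" using assms ileq_iff by blast
  then have "istar a * a = istar (b * (istar a * a)) * (b * (istar a * a))" by simp
  also have "\<dots> = (istar a * a) * (istar b * b) * (istar a * a)"
    by (simp add: star_mult star_star idem_star'[OF L_Idem] mult.assoc)
  also have "\<dots> = (istar b * b) * (istar a * a) * (istar a * a)"
    by (simp add: comm[OF L_Idem L_Idem, of a b])
  also have "\<dots> = (istar b * b) * (istar a * a)"
    by (rule absorb_r[OF L_Idem])
  finally show ?thesis using ileq_Idem[OF L_Idem L_Idem] by blast
qed

end


lemma wb_le:
  fixes e :: "'a::inverse_semigroup"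
  assumes "e \<in> Idem" "way_below_in ileq Idem \<phi> e"
  shows "ileq \<phi> e"
proof -
  have "directed_in ileq {e}" unfolding directed_in_def using ileq_refl by blast
  moreover have "is_sup_in ileq Idem {e} e" unfolding is_sup_in_def using assms(1) ileq_refl by blast
  ultimately show ?thesis using assms unfolding way_below_in_def
    by (metis empty_subsetI insert_subset singletonD ileq_refl)
qed

lemma sup_S:
  fixes D :: "'a::inverse_semigroup set"
  assumes m: "mirror_semigroup TYPE('a)" and D: "D \<subseteq> Idem" "directed_in ileq D"
    and e: "is_sup_in ileq Idem D e"
  shows "is_sup_in ileq UNIV D e"
proof -
  obtain y where y: "is_sup_in ileq UNIV D y"
    using m D e unfolding mirror_semigroup_def by blast
  have eI: "e \<in> Idem" using e unfolding is_sup_in_def by blast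
  have "ileq y e" using y e unfolding is_sup_in_def by blast
  then have yI: "y \<in> Idem" using below_Idem eI by blast
  have "ileq e y" using y e yI unfolding is_sup_in_def by blast
  then have "y = e" using \<open>ileq y e\<close> ileq_antisym by blast
  then show ?thesis using y by simp
qed

lemma Idem_le_eq: "(\<phi>::'a::inverse_semigroup) \<in> Idem \<Longrightarrow> e \<in> Idem \<Longrightarrow> ileq \<phi> e \<Longrightarrow> \<phi> = e * \<phi>"
  using ileq_Idem by blast

lemma dir1:
  fixes e s t :: "'a::inverse_semigroup"
  assumes c: "continuous_poset (ileq :: 'a \<Rightarrow> 'a \<Rightarrow> bool) Idem"
    and m: "mirror_semigroup TYPE('a)" and eI: "e \<in> Idem"
    and s: "s \<in> H e" and t: "t \<in> H e" and st: "s \<noteq> t"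
  shows "\<exists>\<phi>\<in>Idem. way_below_in ileq Idem \<phi> e \<and> s * \<phi> \<noteq> t * \<phi>"
proof (rule ccontr)
  assume na: "\<not> ?thesis"
  define W where "W = {x\<in>Idem. way_below_in ileq Idem x e}"
  have W: "W \<subseteq> Idem" "directed_in ileq W" "is_sup_in ileq Idem W e"
    using c eI unfolding continuous_poset_def W_def by auto
  have supS: "is_sup_in ileq UNIV W e" using sup_S[OF m W] .
  have se: "istar s * s = e" and te: "istar t * t = e" using s t unfolding H_def by auto
  have key: "ileq e (istar a * b)" if ab: "istar a * a = e" "\<forall>\<phi>\<in>W. a * \<phi> = b * \<phi>" for a b
  proof -
    have "ileq \<phi> (istar a * b)" if p: "\<phi> \<in> W" for \<phi>
    proof -
      have pI: "\<phi> \<in> Idem" and pe: "\<phi> = e * \<phi>"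
        using p W_def wb_le[OF eI] Idem_le_eq[OF _ eI] by auto
      have "istar a * b * \<phi> = istar a * (a * \<phi>)" using ab p by (simp add: mult.assoc)
      also have "\<dots> = \<phi>" using ab pe by (simp add: mult.assoc[symmetric])
      finally show ?thesis unfolding ileq_def using pI by metis
    qed
    then show ?thesis using supS unfolding is_sup_in_def by blast
  qed
  have h1: "\<forall>\<phi>\<in>W. s * \<phi> = t * \<phi>" using na W_def by blast
  have k1: "ileq e (istar s * t)" using key[OF se h1] .
  have k2: "ileq e (istar t * s)" using key[OF te] h1 by simp
  have ee: "istar e * e = e" by (simp add: idem_star'[OF eI] eI[unfolded Idem_iff])
  have "e = istar s * t * e" using k1 ileq_iff ee by metis
  also have "\<dots> = istar s * t" using te rL by (metis mult.assoc)
  finally have e1: "e = istar s * t" .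
  have "e = istar t * s * e" using k2 ileq_iff ee by metis
  also have "\<dots> = istar t * s" using se rL by (metis mult.assoc)
  finally have e2: "e = istar t * s" .
  have "s = s * istar s * t" using e1 se rL by (metis mult.assoc)
  then have "ileq s t" using left_ileq[OF R_Idem, of s t] by simp
  moreover have "t = t * istar t * s" using e2 te rL by (metis mult.assoc)
  then have "ileq t s" using left_ileq[OF R_Idem, of t s] by simp
  ultimately show False using ileq_antisym st by blast
qed


lemma dir2:
  fixes dummy :: "'a::inverse_semigroup"
  assumes sep: "\<forall>e\<in>(Idem::'a set). \<forall>s\<in>H e. \<forall>t\<in>H e. s \<noteq> t \<longrightarrow>
              (\<exists>\<phi>\<in>Idem. way_below_in ileq Idem \<phi> e \<and> s * \<phi> \<noteq> t * \<phi>)"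
  shows "mirror_semigroup TYPE('a)"
  unfolding mirror_semigroup_def
proof (intro allI impI)
  fix D :: "'a set"
  assume D: "D \<subseteq> Idem" "directed_in ileq D" and "\<exists>x. is_sup_in ileq Idem D x"
  then obtain x where x: "is_sup_in ileq Idem D x" by blast
  have xI: "x \<in> Idem" and xub: "\<forall>d\<in>D. ileq d x"
    and xl: "\<And>y. y \<in> Idem \<Longrightarrow> \<forall>d\<in>D. ileq d y \<Longrightarrow> ileq x y"
    using x unfolding is_sup_in_def by auto
  have "ileq x z" if z: "\<forall>d\<in>D. ileq d z" for z
  proof -
    have dz: "d = z * d" if "d \<in> D" for d
      using z that D ileq_iff idem_star' Idem_iff by (metis subsetD)
    have dz2: "d = istar z * z * d" if dD: "d \<in> D" for d
    proof -
      have dI: "d \<in> Idem" using dD D by auto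
      have "istar d = d" using idem_star'[OF dI] .
      then have "d = istar (z * d)" using dz[OF dD] by simp
      then have d1: "d = d * istar z" by (simp add: star_mult idem_star'[OF dI])
      have "d = d * d" using dI[unfolded Idem_iff] by simp
      also have "\<dots> = d * istar z * (z * d)" using d1 dz[OF dD] by metis
      also have "\<dots> = d * (istar z * z) * d" by (simp add: mult.assoc)
      also have "\<dots> = (istar z * z) * d * d" using comm[OF dI L_Idem] by simp
      also have "\<dots> = istar z * z * d" using absorb_r[OF dI] by simp
      finally show ?thesis .
    qed
    define g where "g = x * (istar z * z)"
    have gI: "g \<in> Idem" unfolding g_def using mult_Idem[OF xI L_Idem] .
    have "ileq d g" if dD: "d \<in> D" for d
    proof -
      have dI: "d \<in> Idem" using dD D by auto
      have "g * d = x * d" unfolding g_def using dz2[OF dD] by (simp add: mult.assoc)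
      also have "\<dots> = d" using xub dD Idem_le_eq[OF dI xI] by auto
      finally show ?thesis using ileq_Idem[OF dI gI] by simp
    qed
    then have "ileq x g" using xl gI by blast
    then have "x = g * x" using ileq_Idem[OF xI gI] by blast
    also have "\<dots> = istar z * z * (x * x)" unfolding g_def
      using comm[OF xI L_Idem] by (simp add: mult.assoc)
    also have "\<dots> = istar z * z * x" using xI[unfolded Idem_iff] by simp
    finally have xz: "x = istar z * z * x" .
    define a where "a = z * x"
    have aH: "a \<in> H x"
    proof -
      have "istar a * a = x * istar z * (z * x)" unfolding a_def by (simp add: star_mult idem_star'[OF xI])
      also have "\<dots> = x * (istar z * z * x)" by (simp add: mult.assoc)
      also have "\<dots> = x" using xz xI[unfolded Idem_iff] by simp
      finally show ?thesis unfolding H_def by simp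
    qed
    have xH: "x \<in> H x" unfolding H_def using idem_star'[OF xI] xI[unfolded Idem_iff] by simp
    have "a = x"
    proof (rule ccontr)
      assume "a \<noteq> x"
      then obtain \<phi> where p: "\<phi> \<in> Idem" "way_below_in ileq Idem \<phi> x" "a * \<phi> \<noteq> x * \<phi>"
        using sep xI aH xH by blast
      obtain d where dD: "d \<in> D" and pd: "ileq \<phi> d"
        using p(2) D x ileq_refl unfolding way_below_in_def by blast
      have dI: "d \<in> Idem" using dD D by auto
      have pd': "\<phi> = d * \<phi>" using Idem_le_eq[OF p(1) dI pd] .
      have px: "\<phi> = x * \<phi>" using Idem_le_eq[OF p(1) xI] wb_le[OF xI p(2)] by blast
      have "a * \<phi> = z * \<phi>" unfolding a_def using px by (simp add: mult.assoc)
      also have "\<dots> = z * d * \<phi>" using pd' by (metis mult.assoc)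
      also have "\<dots> = \<phi>" using dz[OF dD] pd' by simp
      finally show False using p(3) px by simp
    qed
    then have "x = z * x" unfolding a_def by simp
    then show ?thesis unfolding ileq_def using xI by blast
  qed
  then have "is_sup_in ileq UNIV D x" using xub unfolding is_sup_in_def by blast
  then show "\<exists>y. is_sup_in ileq UNIV D y" by blast
qed


lemma wayA:
  fixes s \<phi> :: "'a::inverse_semigroup"
  assumes pI: "\<phi> \<in> Idem" and wb: "way_below_in ileq Idem \<phi> (istar s * s)"
  shows "way_below_in ileq UNIV (s * \<phi>) s"
  unfolding way_below_in_def
proof (intro allI impI)
  fix D :: "'a set" and y
  assume D: "D \<subseteq> UNIV" "directed_in ileq D" and y: "is_sup_in ileq UNIV D y" and sy: "ileq s y"
  define e where "e = istar s * s"
  have eI: "e \<in> Idem" unfolding e_def by (rule L_Idem)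
  define E where "E = (\<lambda>d. istar d * d) ` D"
  have EI: "E \<subseteq> Idem" unfolding E_def using L_Idem by blast
  have Ed: "directed_in ileq E" using D(2) mono_L unfolding directed_in_def E_def by blast
  have Esup: "is_sup_in ileq Idem E (istar y * y)"
    unfolding is_sup_in_def
  proof (intro conjI ballI impI)
    show "istar y * y \<in> Idem" by (rule L_Idem)
    fix d assume "d \<in> E"
    then show "ileq d (istar y * y)" using y mono_L unfolding E_def is_sup_in_def by blast
  next
    fix g assume gI: "g \<in> Idem" and ub: "\<forall>d\<in>E. ileq d g"
    have "ileq d (y * g)" if dD: "d \<in> D" for d
    proof -
      have d1: "d = y * (istar d * d)" using y dD ileq_iff unfolding is_sup_in_def by blast
      have d2: "istar d * d = g * (istar d * d)"
        using ub dD ileq_Idem[OF L_Idem gI] unfolding E_def by blast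
      have "d = y * g * (istar d * d)" using d1 d2 by (metis mult.assoc)
      then show ?thesis unfolding ileq_def using L_Idem by blast
    qed
    then have "ileq y (y * g)" using y unfolding is_sup_in_def by blast
    then have "y = y * g * (istar y * y)" using ileq_iff by blast
    also have "\<dots> = y * (istar y * y) * g" using comm[OF gI L_Idem] by (simp add: mult.assoc)
    also have "\<dots> = y * g" by (simp add: rL)
    finally have yg: "y = y * g" .
    have "istar y * y = istar y * y * g" using yg by (metis mult.assoc)
    also have "\<dots> = g * (istar y * y)" using comm[OF gI L_Idem] by simp
    finally show "ileq (istar y * y) g" using ileq_Idem[OF L_Idem gI] by blast
  qed
  have "ileq e (istar y * y)" unfolding e_def using mono_L[OF sy] .
  then obtain f where fE: "f \<in> E" and pf: "ileq \<phi> f"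
    using wb EI Ed Esup unfolding way_below_in_def e_def by blast
  then obtain d where dD: "d \<in> D" and fd: "f = istar d * d" unfolding E_def by blast
  have pf': "\<phi> = istar d * d * \<phi>" using Idem_le_eq[OF pI L_Idem] pf fd by blast
  have pe: "\<phi> = e * \<phi>" using Idem_le_eq[OF pI eI] wb_le[OF eI] wb e_def by blast
  have s1: "s = y * e" using sy ileq_iff e_def by blast
  have d1: "d = y * (istar d * d)" using y dD ileq_iff unfolding is_sup_in_def by blast
  have "s * \<phi> = y * \<phi>" using s1 pe by (metis mult.assoc)
  also have "\<dots> = y * (istar d * d) * \<phi>" using pf' by (metis mult.assoc)
  also have "\<dots> = d * \<phi>" using d1 by simp
  finally have "s * \<phi> = d * \<phi>" .
  then have "ileq (s * \<phi>) d" unfolding ileq_def using pI by blast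
  then show "\<exists>d\<in>D. ileq (s * \<phi>) d" using dD by blast
qed

lemma wbS_le:
  fixes x s :: "'a::inverse_semigroup"
  assumes "way_below_in ileq UNIV x s"
  shows "ileq x s"
proof -
  have "directed_in ileq {s}" unfolding directed_in_def using ileq_refl by blast
  moreover have "is_sup_in ileq UNIV {s} s" unfolding is_sup_in_def using ileq_refl by blast
  ultimately show ?thesis using assms unfolding way_below_in_def
    by (metis subset_UNIV singletonD ileq_refl)
qed

lemma contS:
  fixes dummy :: "'a::inverse_semigroup"
  assumes c: "continuous_poset (ileq :: 'a \<Rightarrow> 'a \<Rightarrow> bool) Idem"
    and m: "mirror_semigroup TYPE('a)"
  shows "continuous_poset (ileq :: 'a \<Rightarrow> 'a \<Rightarrow> bool) UNIV"
  unfolding continuous_poset_def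
proof (intro ballI conjI)
  fix s :: 'a
  define e where "e = istar s * s"
  have eI: "e \<in> Idem" unfolding e_def by (rule L_Idem)
  define W where "W = {x\<in>Idem. way_below_in ileq Idem x e}"
  have W: "W \<subseteq> Idem" "directed_in ileq W" "is_sup_in ileq Idem W e"
    using c eI unfolding continuous_poset_def W_def by auto
  have supS: "is_sup_in ileq UNIV W e" using sup_S[OF m W] .
  define V where "V = (\<lambda>\<phi>. s * \<phi>) ` W"
  define WS where "WS = {x\<in>UNIV. way_below_in ileq UNIV x s}"
  have VWS: "V \<subseteq> WS" unfolding V_def WS_def W_def e_def using wayA by blast
  have monoV: "ileq (s * \<phi>1) (s * \<phi>3)" if "\<phi>1 \<in> Idem" "\<phi>3 \<in> Idem" "ileq \<phi>1 \<phi>3" for \<phi>1 \<phi>3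
  proof -
    have "\<phi>1 = \<phi>3 * \<phi>1" using Idem_le_eq that by blast
    then have "s * \<phi>1 = s * \<phi>3 * \<phi>1" by (metis mult.assoc)
    then show ?thesis unfolding ileq_def using that by blast
  qed
  have Vd: "directed_in ileq V"
    unfolding directed_in_def
  proof (intro conjI ballI)
    show "V \<noteq> {}" using W(2) unfolding V_def directed_in_def by blast
    fix a b assume "a \<in> V" "b \<in> V"
    then obtain p q where pq: "p \<in> W" "q \<in> W" "a = s * p" "b = s * q" unfolding V_def by blast
    then obtain r where r: "r \<in> W" "ileq p r" "ileq q r" using W(2) unfolding directed_in_def by blast
    have "ileq a (s * r)" "ileq b (s * r)" using monoV pq r W(1) by auto
    then show "\<exists>z\<in>V. ileq a z \<and> ileq b z" using r(1) unfolding V_def by blast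
  qed
  have Vsup: "is_sup_in ileq UNIV V s"
    unfolding is_sup_in_def
  proof (intro conjI ballI impI)
    show "s \<in> UNIV" by simp
    fix v assume "v \<in> V"
    then show "ileq v s" unfolding V_def ileq_def using W(1) by blast
  next
    fix u assume ub: "\<forall>v\<in>V. ileq v u"
    have "ileq \<phi> (istar s * u)" if pW: "\<phi> \<in> W" for \<phi>
    proof -
      have pI: "\<phi> \<in> Idem" using pW W(1) by blast
      have pe: "\<phi> = e * \<phi>" using Idem_le_eq[OF pI eI] wb_le[OF eI] pW W_def by blast
      have "istar (s * \<phi>) * (s * \<phi>) = \<phi> * e * \<phi>"
        unfolding e_def by (simp add: star_mult idem_star'[OF pI] mult.assoc)
      also have "\<dots> = e * \<phi> * \<phi>" using comm[OF pI eI] by simp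
      also have "\<dots> = \<phi>" by (subst absorb_r[OF pI]) (rule pe[symmetric])
      finally have st: "istar (s * \<phi>) * (s * \<phi>) = \<phi>" .
      have "s * \<phi> = u * \<phi>" using ub pW ileq_iff[of "s * \<phi>" u] st unfolding V_def by auto
      then have "istar s * u * \<phi> = e * \<phi>" unfolding e_def by (metis mult.assoc)
      then have "\<phi> = istar s * u * \<phi>" using pe by simp
      then show ?thesis unfolding ileq_def using pI by blast
    qed
    then have "ileq e (istar s * u)" using supS unfolding is_sup_in_def by blast
    then have "e = istar s * u * e" using ileq_iff idem_star'[OF eI] eI[unfolded Idem_iff] by metis
    then have "s = (s * istar s) * (u * e)" using rL e_def by (metis mult.assoc)
    then have "ileq s (u * e)" using left_ileq[OF R_Idem, of s "u * e"] by simp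
    moreover have "ileq (u * e) u" using right_ileq[OF eI] .
    ultimately show "ileq s u" using ileq_trans by blast
  qed
  have wsle: "\<exists>v\<in>V. ileq x v" if "x \<in> WS" for x
    using that Vd Vsup ileq_refl unfolding WS_def way_below_in_def by blast
  show "directed_in ileq {x\<in>UNIV. way_below_in ileq UNIV x s}"
    unfolding directed_in_def WS_def[symmetric]
  proof (intro conjI ballI)
    show "WS \<noteq> {}" using Vd VWS unfolding directed_in_def by blast
    fix a b assume ab: "a \<in> WS" "b \<in> WS"
    obtain v1 v2 where v: "v1 \<in> V" "v2 \<in> V" "ileq a v1" "ileq b v2" using wsle ab by blast
    then obtain w where w: "w \<in> V" "ileq v1 w" "ileq v2 w" using Vd unfolding directed_in_def by blast
    show "\<exists>z\<in>WS. ileq a z \<and> ileq b z" using w v VWS ileq_trans by blast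
  qed
  show "is_sup_in ileq UNIV {x\<in>UNIV. way_below_in ileq UNIV x s} s"
    unfolding is_sup_in_def WS_def[symmetric]
  proof (intro conjI ballI impI)
    show "s \<in> UNIV" by simp
    fix x assume "x \<in> WS" then show "ileq x s" using wbS_le unfolding WS_def by blast
  next
    fix u assume "\<forall>x\<in>WS. ileq x u"
    then have "\<forall>v\<in>V. ileq v u" using VWS by blast
    then show "ileq s u" using Vsup unfolding is_sup_in_def by blast
  qed
qed

theorem theorem5p5:
  assumes "continuous_poset (ileq :: 'a::inverse_semigroup \<Rightarrow> 'a \<Rightarrow> bool) Idem"
  shows "(mirror_semigroup TYPE('a) \<longleftrightarrow>
           (\<forall>e\<in>(Idem::'a set). \<forall>s\<in>H e. \<forall>t\<in>H e. s \<noteq> t \<longrightarrow>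
              (\<exists>\<phi>\<in>Idem. way_below_in ileq Idem \<phi> e \<and> s * \<phi> \<noteq> t * \<phi>)))
         \<and> (mirror_semigroup TYPE('a) \<longrightarrow> continuous_poset (ileq :: 'a \<Rightarrow> 'a \<Rightarrow> bool) UNIV)"
  using dir1[OF assms] dir2 contS[OF assms] by blast

end
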